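(* Let $I=[x_0,x_N]$ with partition $x_0<x_1<\dots<x_N$, and for $i\in\{1,\dots,N\}$ let $I_i=[x_{i-1},x_i]$, $a_i=\frac{x_i-x_{i-1}}{x_N-x_0}$, $l_i(x)=a_ix+\frac{x_Nx_{i-1}-x_0x_i}{x_N-x_0}$ (so $l_i:I\to I_i$ is an affine bijection) and $Q_i=l_i^{-1}:I_i\to I$. Let $0<d\le 1$ and $f\in Lip_d(I)$. For $r\in\mathbb{N}$ let $b_r\in Lip_{d,f}(I)$ with $\|b\|_d:=\sup_{r\in\mathbb{N}}\|b_r\|_d<\infty$, and let $\alpha_{i,r}\in Lip_d(I)$ ($i=1,\dots,N$, $r\in\mathbb{N}$) satisfy $\max_{1\le i\le N}\frac{\|\alpha_{i,r}\|_d}{a_i^d}<\frac12$ for each $r$. Define $T^{\alpha_r}$ on $Lip_{d,f}(I)$ by $$(T^{\alpha_r}g)(x)=f(x)+\alpha_{i,r}(Q_i(x))\,g(Q_i(x))-\alpha_{i,r}(Q_i(x))\,b_r(Q_i(x)),\qquad x\in I_i,\ i=1,\dots,N.$$ Then: (1) $T^{\alpha_r}$ is well defined as a map $Lip_{d,f}(I)\to Lip_{d,f}(I)$; (2) $T^{\alpha_r}:Lip_{d,f}(I)\to Lip_{d,f}(I)$ is a contraction with respect to $\|\cdot\|_d$; (3) there exists a unique function $f^\alpha_{b,Lip_d}\in Lip_{d,f}(I)$ such that for every $g\in Lip_{d,f}(I)$ the sequence $T^{\alpha_1}\circ T^{\alpha_2}\circ\cdots\circ T^{\alpha_r}g$ converges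 (as $r\to\infty$) to $f^\alpha_{b,Lip_d}$.
   Context: For $g:I\to\mathbb{R}$ and $0<d\le1$, $Lip_d(g)=\sup\{|g(x)-g(y)|/|x-y|^d: x,y\in I, x\ne y\}$; $Lip_d(I)=\{g:I\to\mathbb{R}: Lip_d(g)<\infty\}$ with norm $\|g\|_d=\max\{\|g\|_\infty, Lip_d(g)\}$, a Banach space. $Lip_{d,f}(I)=\{g\in Lip_d(I): g(x_0)=f(x_0),\ g(x_N)=f(x_N)\}$, a closed subspace. Convergence in (3) is with respect to $\|\cdot\|_d$. *)

theory Defs
  imports "HOL-Analysis.Analysis"
begin

definition lip_const :: "real \<Rightarrow> real set \<Rightarrow> (real \<Rightarrow> real) \<Rightarrow> real" where
  "lip_const d I g = Sup {\<bar>g u - g v\<bar> / \<bar>u - v\<bar> powr d | u v. u \<in> I \<and> v \<in> I \<and> u \<noteq> v}"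

definition Lip :: "real \<Rightarrow> real set \<Rightarrow> (real \<Rightarrow> real) set" where
  "Lip d I = {g. bdd_above {\<bar>g u - g v\<bar> / \<bar>u - v\<bar> powr d | u v. u \<in> I \<and> v \<in> I \<and> u \<noteq> v}}"

definition sup_norm :: "real set \<Rightarrow> (real \<Rightarrow> real) \<Rightarrow> real" where
  "sup_norm I g = Sup ((\<lambda>u. \<bar>g u\<bar>) ` I)"

definition lip_norm :: "real \<Rightarrow> real set \<Rightarrow> (real \<Rightarrow> real) \<Rightarrow> real" where
  "lip_norm d I g = max (sup_norm I g) (lip_const d I g)"

definition Lip_f :: "real \<Rightarrow> real \<Rightarrow> real \<Rightarrow> (real \<Rightarrow> real) \<Rightarrow> (real \<Rightarrow> real) set" where
  "Lip_f d p q f = {g \<in> Lip d {p..q}. g p = f p \<and> g q = f q}"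

definition aa :: "(nat \<Rightarrow> real) \<Rightarrow> nat \<Rightarrow> nat \<Rightarrow> real" where
  "aa x N i = (x i - x (i - 1)) / (x N - x 0)"

definition ll :: "(nat \<Rightarrow> real) \<Rightarrow> nat \<Rightarrow> nat \<Rightarrow> real \<Rightarrow> real" where
  "ll x N i t = aa x N i * t + (x N * x (i - 1) - x 0 * x i) / (x N - x 0)"

definition QQ :: "(nat \<Rightarrow> real) \<Rightarrow> nat \<Rightarrow> nat \<Rightarrow> real \<Rightarrow> real" where
  "QQ x N i t = (t - (x N * x (i - 1) - x 0 * x i) / (x N - x 0)) / aa x N i"

(* T^{alpha}: on I_i uses the formula with index i; at the nodes the first interval
   containing t is chosen (well-definedness = agreement with every applicable formula) *)
definition Tmap :: "(nat \<Rightarrow> real) \<Rightarrow> nat \<Rightarrow> (real \<Rightarrow> real) \<Rightarrow> (nat \<Rightarrow> real \<Rightarrow> real)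
    \<Rightarrow> (real \<Rightarrow> real) \<Rightarrow> (real \<Rightarrow> real) \<Rightarrow> real \<Rightarrow> real" where
  "Tmap x N f alpha b g t =
     (let i = (LEAST i. 1 \<le> i \<and> t \<le> x i); s = QQ x N i t
      in f t + alpha i s * g s - alpha i s * b s)"

definition Tcomp :: "(nat \<Rightarrow> real) \<Rightarrow> nat \<Rightarrow> (real \<Rightarrow> real) \<Rightarrow> (nat \<Rightarrow> nat \<Rightarrow> real \<Rightarrow> real)
    \<Rightarrow> (nat \<Rightarrow> real \<Rightarrow> real) \<Rightarrow> nat \<Rightarrow> (real \<Rightarrow> real) \<Rightarrow> real \<Rightarrow> real" where
  "Tcomp x N f alpha b r g =
     foldr (\<lambda>k h. Tmap x N f (\<lambda>i. alpha i k) (b k) h) [1..<Suc r] g"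

end

theory Submission
  imports Defs "HOL-Analysis.Analysis"
begin

lemma powr_sum_le:
  fixes p q d :: real
  assumes p: "p \<ge> 0" and q: "q \<ge> 0" and d: "0 < d" "d \<le> 1"
  shows "p powr d + q powr d \<le> 2 powr (1 - d) * (p + q) powr d"
proof (cases "p = 0 \<or> q = 0")
  case True
  have "(1::real) \<le> 2 powr (1 - d)" using d by (simp add: ge_one_powr_ge_zero)
  then show ?thesis using True p q d
    by (auto simp: mult_le_cancel_right1)
next
  case False
  hence pp: "p > 0" and qp: "q > 0" using p q by auto
  define P where "P = p powr d"
  define Q where "Q = q powr d"
  have P0: "P > 0" "Q > 0" using pp qp by (auto simp: P_def Q_def)
  have cv: "convex_on {0<..} (\<lambda>x::real. x powr (1/d))"
    by (rule powr_convex) (use d in simp)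
  have "((1 - 1/2) *\<^sub>R P + (1/2) *\<^sub>R Q) powr (1/d) \<le> (1 - 1/2) * P powr (1/d) + (1/2) * Q powr (1/d)"
    using convex_onD[OF cv, of "1/2" P Q] P0 by simp
  moreover have "P powr (1/d) = p" "Q powr (1/d) = q"
    using pp qp d by (auto simp: P_def Q_def powr_powr)
  ultimately have h: "((P + Q)/2) powr (1/d) \<le> (p + q)/2" by (simp add: field_simps)
  have "(P+Q)/2 = (((P + Q)/2) powr (1/d)) powr d"
    using P0 d by (simp add: powr_powr)
  also have "\<dots> \<le> ((p+q)/2) powr d"
    by (rule powr_mono2) (use h d P0 in auto)
  also have "\<dots> = (p+q) powr d / 2 powr d"
    using pp qp by (simp add: powr_divide)
  finally have "P + Q \<le> 2 * (p+q) powr d / 2 powr d" by (simp add: mult.commute)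
  also have "\<dots> = 2 powr (1 - d) * (p + q) powr d"
    by (simp add: powr_diff)
  finally show ?thesis by (simp add: P_def Q_def)
qed

section \<open>Generic Hoelder facts\<close>

lemma lipD:
  assumes "g \<in> Lip d I" "u \<in> I" "v \<in> I"
  shows "\<bar>g u - g v\<bar> \<le> lip_const d I g * \<bar>u - v\<bar> powr d"
proof (cases "u = v")
  case True then show ?thesis by simp
next
  case False
  have "\<bar>g u - g v\<bar> / \<bar>u - v\<bar> powr d \<le> lip_const d I g"
    unfolding lip_const_def
    by (rule cSup_upper) (use assms False in \<open>auto simp: Lip_def\<close>)
  moreover have "\<bar>u - v\<bar> powr d > 0" using False by simp
  ultimately show ?thesis by (simp add: divide_le_eq)
qed

lemma lipI:
  assumes "\<And>u v. u \<in> I \<Longrightarrow> v \<in> I \<Longrightarrow> \<bar>g u - g v\<bar> \<le> K * \<bar>u - v\<bar> powr d"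
  shows "g \<in> Lip d I"
  unfolding Lip_def bdd_above_def
proof (intro CollectI exI[of _ K] ballI)
  fix z assume "z \<in> {\<bar>g u - g v\<bar> / \<bar>u - v\<bar> powr d |u v. u \<in> I \<and> v \<in> I \<and> u \<noteq> v}"
  then obtain u v where z: "z = \<bar>g u - g v\<bar> / \<bar>u - v\<bar> powr d" "u \<in> I" "v \<in> I" "u \<noteq> v" by blast
  have "\<bar>u - v\<bar> powr d > 0" using z by simp
  then show "z \<le> K" using assms[OF z(2,3)] z(1) by (simp add: divide_le_eq)
qed

lemma lip_le:
  assumes "\<And>u v. u \<in> I \<Longrightarrow> v \<in> I \<Longrightarrow> \<bar>g u - g v\<bar> \<le> K * \<bar>u - v\<bar> powr d"
    and "u0 \<in> I" "v0 \<in> I" "u0 \<noteq> v0"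
  shows "lip_const d I g \<le> K"
  unfolding lip_const_def
proof (rule cSup_least)
  show "{\<bar>g u - g v\<bar> / \<bar>u - v\<bar> powr d |u v. u \<in> I \<and> v \<in> I \<and> u \<noteq> v} \<noteq> {}"
    using assms(2-4) by blast
next
  fix z assume "z \<in> {\<bar>g u - g v\<bar> / \<bar>u - v\<bar> powr d |u v. u \<in> I \<and> v \<in> I \<and> u \<noteq> v}"
  then obtain u v where z: "z = \<bar>g u - g v\<bar> / \<bar>u - v\<bar> powr d" "u \<in> I" "v \<in> I" "u \<noteq> v" by blast
  have "\<bar>u - v\<bar> powr d > 0" using z by simp
  then show "z \<le> K" using assms(1)[OF z(2,3)] z(1) by (simp add: divide_le_eq)
qed

lemma lip_nonneg:
  assumes "g \<in> Lip d I" "u0 \<in> I" "v0 \<in> I" "u0 \<noteq> v0"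
  shows "0 \<le> lip_const d I g"
proof -
  have "0 \<le> \<bar>g u0 - g v0\<bar> / \<bar>u0 - v0\<bar> powr d" by simp
  also have "\<dots> \<le> lip_const d I g"
    unfolding lip_const_def
    by (rule cSup_upper) (use assms in \<open>auto simp: Lip_def\<close>)
  finally show ?thesis .
qed

lemma supD:
  assumes "bdd_above ((\<lambda>u. \<bar>g u\<bar>) ` I)" "u \<in> I"
  shows "\<bar>g u\<bar> \<le> sup_norm I g"
  unfolding sup_norm_def by (rule cSup_upper) (use assms in auto)

lemma sup_le:
  assumes "I \<noteq> {}" "\<And>u. u \<in> I \<Longrightarrow> \<bar>g u\<bar> \<le> K"
  shows "sup_norm I g \<le> K"
  unfolding sup_norm_def by (rule cSup_least) (use assms in auto)

lemma sup_nonneg: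
  assumes "bdd_above ((\<lambda>u. \<bar>g u\<bar>) ` I)" "u \<in> I"
  shows "0 \<le> sup_norm I g"
  using supD[OF assms] by linarith

lemma Lip_bounded:
  assumes "g \<in> Lip d {p..q}" "p \<le> q" "0 < d"
  shows "bdd_above ((\<lambda>u. \<bar>g u\<bar>) ` {p..q})"
proof -
  have "\<bar>g u\<bar> \<le> \<bar>g p\<bar> + \<bar>lip_const d {p..q} g\<bar> * (q - p) powr d" if "u \<in> {p..q}" for u
  proof -
    have "\<bar>g u - g p\<bar> \<le> lip_const d {p..q} g * \<bar>u - p\<bar> powr d"
      using lipD[OF assms(1) that] assms(2) by auto
    also have "\<dots> \<le> \<bar>lip_const d {p..q} g\<bar> * \<bar>u - p\<bar> powr d"
      by (simp add: mult_right_mono)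
    also have "\<dots> \<le> \<bar>lip_const d {p..q} g\<bar> * (q - p) powr d"
      by (rule mult_left_mono) (use that assms in \<open>auto intro!: powr_mono2\<close>)
    finally show ?thesis by linarith
  qed
  then show ?thesis unfolding bdd_above_def by (intro exI[of _ "\<bar>g p\<bar> + \<bar>lip_const d {p..q} g\<bar> * (q - p) powr d"]) auto
qed

definition bnd :: "real \<Rightarrow> real set \<Rightarrow> (real \<Rightarrow> real) \<Rightarrow> real \<Rightarrow> bool" where
  "bnd d I w E \<longleftrightarrow> (\<forall>t\<in>I. \<bar>w t\<bar> \<le> E) \<and> (\<forall>u\<in>I. \<forall>v\<in>I. \<bar>w u - w v\<bar> \<le> E * \<bar>u - v\<bar> powr d)"

definition rho :: "real \<Rightarrow> real set \<Rightarrow> (real \<Rightarrow> real) \<Rightarrow> real" where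
  "rho d I w = lip_const d I w + 2 * sup_norm I w"

lemma bnd_Lip: "bnd d I w E \<Longrightarrow> w \<in> Lip d I"
  unfolding bnd_def by (rule lipI) auto

lemma bnd_norm:
  assumes "bnd d {p..q} w E" "p < q"
  shows "0 \<le> lip_norm d {p..q} w" "lip_norm d {p..q} w \<le> E"
proof -
  have b: "bdd_above ((\<lambda>u. \<bar>w u\<bar>) ` {p..q})" using assms(1) by (auto simp: bnd_def bdd_above_def)
  have "0 \<le> sup_norm {p..q} w" by (rule sup_nonneg[OF b, of p]) (use assms in auto)
  then show "0 \<le> lip_norm d {p..q} w" by (simp add: lip_norm_def)
  have "sup_norm {p..q} w \<le> E" by (rule sup_le) (use assms in \<open>auto simp: bnd_def\<close>)
  moreover have "lip_const d {p..q} w \<le> E"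
    by (rule lip_le[of _ _ _ _ p q]) (use assms in \<open>auto simp: bnd_def\<close>)
  ultimately show "lip_norm d {p..q} w \<le> E" by (simp add: lip_norm_def)
qed

lemma Lip_facts:
  assumes "w \<in> Lip d {p..q}" "p < q" "0 < d"
  shows "0 \<le> lip_const d {p..q} w" "0 \<le> sup_norm {p..q} w"
    "\<And>t. t \<in> {p..q} \<Longrightarrow> \<bar>w t\<bar> \<le> sup_norm {p..q} w"
    "\<And>u v. u \<in> {p..q} \<Longrightarrow> v \<in> {p..q} \<Longrightarrow> \<bar>w u - w v\<bar> \<le> lip_const d {p..q} w * \<bar>u - v\<bar> powr d"
    "lip_norm d {p..q} w \<le> rho d {p..q} w"
    "sup_norm {p..q} w \<le> lip_norm d {p..q} w" "lip_const d {p..q} w \<le> lip_norm d {p..q} w"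
proof -
  have b: "bdd_above ((\<lambda>u. \<bar>w u\<bar>) ` {p..q})" by (rule Lip_bounded) (use assms in auto)
  show l0: "0 \<le> lip_const d {p..q} w" by (rule lip_nonneg[OF assms(1), of p q]) (use assms in auto)
  show s0: "0 \<le> sup_norm {p..q} w" by (rule sup_nonneg[OF b, of p]) (use assms in auto)
  show "\<And>t. t \<in> {p..q} \<Longrightarrow> \<bar>w t\<bar> \<le> sup_norm {p..q} w" by (rule supD[OF b])
  show "\<And>u v. u \<in> {p..q} \<Longrightarrow> v \<in> {p..q} \<Longrightarrow> \<bar>w u - w v\<bar> \<le> lip_const d {p..q} w * \<bar>u - v\<bar> powr d"
    by (rule lipD[OF assms(1)])
  show "lip_norm d {p..q} w \<le> rho d {p..q} w" using l0 s0 by (simp add: lip_norm_def rho_def)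
  show "sup_norm {p..q} w \<le> lip_norm d {p..q} w" "lip_const d {p..q} w \<le> lip_norm d {p..q} w"
    by (auto simp: lip_norm_def)
qed

lemma rho_bnd:
  assumes "w \<in> Lip d {p..q}" "p < q" "0 < d" "rho d {p..q} w \<le> E"
  shows "bnd d {p..q} w E"
proof -
  note F = Lip_facts[OF assms(1-3)]
  have "lip_const d {p..q} w \<le> E" "sup_norm {p..q} w \<le> E" using F(1,2) assms(4) by (auto simp: rho_def)
  then show ?thesis unfolding bnd_def
    using F(3,4) by (meson mult_right_mono order_trans powr_ge_zero)
qed

lemma bnd_add:
  assumes "bnd d I u E1" "bnd d I v E2"
  shows "bnd d I (\<lambda>t. u t + v t) (E1 + E2)"
  using assms unfolding bnd_def
proof (intro conjI ballI)
  fix t assume "t \<in> I" then show "\<bar>u t + v t\<bar> \<le> E1 + E2" using assms unfolding bnd_def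
    by (smt (verit))
next
  fix a c assume ac: "a \<in> I" "c \<in> I"
  have "\<bar>(u a + v a) - (u c + v c)\<bar> \<le> \<bar>u a - u c\<bar> + \<bar>v a - v c\<bar>" by linarith
  also have "\<dots> \<le> E1 * \<bar>a - c\<bar> powr d + E2 * \<bar>a - c\<bar> powr d" using assms ac unfolding bnd_def
    by (meson add_mono)
  finally show "\<bar>(u a + v a) - (u c + v c)\<bar> \<le> (E1 + E2) * \<bar>a - c\<bar> powr d"
    by (simp add: distrib_right)
qed

lemma Lip_bnd:
  assumes "w \<in> Lip d {p..q}" "p < q" "0 < d"
  shows "bnd d {p..q} w (rho d {p..q} w)"
  by (rule rho_bnd[OF assms order_refl])

lemma Lip_addsub:
  assumes "u \<in> Lip d {p..q}" "v \<in> Lip d {p..q}" "p < q" "0 < d"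
  shows "(\<lambda>t. u t + v t) \<in> Lip d {p..q}" "(\<lambda>t. u t - v t) \<in> Lip d {p..q}"
    "rho d {p..q} (\<lambda>t. u t + v t) \<le> rho d {p..q} u + rho d {p..q} v"
    "rho d {p..q} (\<lambda>t. u t - v t) \<le> rho d {p..q} u + rho d {p..q} v"
proof -
  note U = Lip_facts[OF assms(1,3,4)] and V = Lip_facts[OF assms(2,3,4)]
  have h1: "\<bar>(u a + v a) - (u c + v c)\<bar> \<le> (lip_const d {p..q} u + lip_const d {p..q} v) * \<bar>a - c\<bar> powr d"
    if "a \<in> {p..q}" "c \<in> {p..q}" for a c
  proof -
    have "\<bar>(u a + v a) - (u c + v c)\<bar> \<le> \<bar>u a - u c\<bar> + \<bar>v a - v c\<bar>" by linarith
    also have "\<dots> \<le> lip_const d {p..q} u * \<bar>a - c\<bar> powr d + lip_const d {p..q} v * \<bar>a - c\<bar> powr d"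
      using U(4) V(4) that by (meson add_mono)
    finally show ?thesis by (simp add: distrib_right)
  qed
  have h2: "\<bar>(u a - v a) - (u c - v c)\<bar> \<le> (lip_const d {p..q} u + lip_const d {p..q} v) * \<bar>a - c\<bar> powr d"
    if "a \<in> {p..q}" "c \<in> {p..q}" for a c
  proof -
    have "\<bar>(u a - v a) - (u c - v c)\<bar> \<le> \<bar>u a - u c\<bar> + \<bar>v a - v c\<bar>" by linarith
    also have "\<dots> \<le> lip_const d {p..q} u * \<bar>a - c\<bar> powr d + lip_const d {p..q} v * \<bar>a - c\<bar> powr d"
      using U(4) V(4) that by (meson add_mono)
    finally show ?thesis by (simp add: distrib_right)
  qed
  show "(\<lambda>t. u t + v t) \<in> Lip d {p..q}" by (rule lipI) (rule h1)
  show "(\<lambda>t. u t - v t) \<in> Lip d {p..q}" by (rule lipI) (rule h2)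
  have s1: "sup_norm {p..q} (\<lambda>t. u t + v t) \<le> sup_norm {p..q} u + sup_norm {p..q} v"
    by (rule sup_le) (use assms U(3) V(3) in \<open>auto intro!: abs_triangle_ineq[THEN order_trans] add_mono\<close>)
  have s2: "sup_norm {p..q} (\<lambda>t. u t - v t) \<le> sup_norm {p..q} u + sup_norm {p..q} v"
    by (rule sup_le) (use assms U(3) V(3) in \<open>auto intro!: abs_triangle_ineq4[THEN order_trans] add_mono\<close>)
  have l1: "lip_const d {p..q} (\<lambda>t. u t + v t) \<le> lip_const d {p..q} u + lip_const d {p..q} v"
    by (rule lip_le[of _ _ _ _ p q]) (use h1 assms in auto)
  have l2: "lip_const d {p..q} (\<lambda>t. u t - v t) \<le> lip_const d {p..q} u + lip_const d {p..q} v"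
    by (rule lip_le[of _ _ _ _ p q]) (use h2 assms in auto)
  show "rho d {p..q} (\<lambda>t. u t + v t) \<le> rho d {p..q} u + rho d {p..q} v"
    using s1 l1 by (simp add: rho_def)
  show "rho d {p..q} (\<lambda>t. u t - v t) \<le> rho d {p..q} u + rho d {p..q} v"
    using s2 l2 by (simp add: rho_def)
qed



locale pset =
  fixes x :: "nat \<Rightarrow> real" and N :: nat and d :: real
  assumes N1: "N \<ge> 1" and part: "\<And>i. i < N \<Longrightarrow> x i < x (Suc i)"
    and d0: "0 < d" and d1: "d \<le> 1"
begin

lemma xmono: "i < j \<Longrightarrow> j \<le> N \<Longrightarrow> x i < x j"
proof (induction j)
  case 0 then show ?case by simp
next
  case (Suc j)
  show ?case
  proof (cases "i = j")
    case True then show ?thesis using Suc part by simp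
  next
    case False then have "x i < x j" using Suc by simp
    then show ?thesis using part[of j] Suc by simp
  qed
qed

lemma xmono_le: "i \<le> j \<Longrightarrow> j \<le> N \<Longrightarrow> x i \<le> x j"
  using xmono[of i j] by (cases "i = j") auto

lemma x0N: "x 0 < x N" using xmono[of 0 N] N1 by simp

lemma aa_pos: "1 \<le> i \<Longrightarrow> i \<le> N \<Longrightarrow> 0 < aa x N i"
  unfolding aa_def using xmono[of "i - 1" i] x0N by (auto intro!: divide_pos_pos)

lemma aa_le1: "1 \<le> i \<Longrightarrow> i \<le> N \<Longrightarrow> aa x N i \<le> 1"
proof -
  assume i: "1 \<le> i" "i \<le> N"
  have "x 0 \<le> x (i - 1)" by (rule xmono_le) (use i in auto)
  moreover have "x i \<le> x N" by (rule xmono_le) (use i in auto)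
  ultimately show ?thesis unfolding aa_def using x0N by (auto simp: divide_le_eq)
qed

lemma aa_powr_le1: "1 \<le> i \<Longrightarrow> i \<le> N \<Longrightarrow> aa x N i powr d \<le> 1"
proof -
  assume i: "1 \<le> i" "i \<le> N"
  have "aa x N i powr d \<le> 1 powr d" by (rule powr_mono2) (use aa_pos[OF i] aa_le1[OF i] d0 in auto)
  then show ?thesis by simp
qed

lemma QQ_eq: "1 \<le> i \<Longrightarrow> i \<le> N \<Longrightarrow> QQ x N i t = x 0 + (t - x (i - 1)) / aa x N i"
proof -
  assume i: "1 \<le> i" "i \<le> N"
  have a: "x i - x (i - 1) > 0" using xmono[of "i - 1" i] i by auto
  have b: "x N - x 0 > 0" using x0N by simp
  have c: "(x N * x (i - 1) - x 0 * x i) / (x N - x 0) = x (i - 1) - aa x N i * x 0"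
    using b by (simp add: aa_def field_simps)
  have "aa x N i \<noteq> 0" using aa_pos[OF i] by simp
  then show ?thesis unfolding QQ_def c by (simp add: field_simps)
qed

lemma QQ_diff: "1 \<le> i \<Longrightarrow> i \<le> N \<Longrightarrow> QQ x N i u - QQ x N i v = (u - v) / aa x N i"
  by (simp add: QQ_eq diff_divide_distrib)

lemma QQ_left: "1 \<le> i \<Longrightarrow> i \<le> N \<Longrightarrow> QQ x N i (x (i - 1)) = x 0"
  by (simp add: QQ_eq)

lemma QQ_right: "1 \<le> i \<Longrightarrow> i \<le> N \<Longrightarrow> QQ x N i (x i) = x N"
proof -
  assume i: "1 \<le> i" "i \<le> N"
  have a: "x i - x (i - 1) > 0" using xmono[of "i - 1" i] i by auto
  have b: "x N - x 0 > 0" using x0N by simp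
  show ?thesis using a b i by (simp add: QQ_eq aa_def)
qed

lemma QQ_range:
  assumes "1 \<le> i" "i \<le> N" "t \<in> {x (i - 1)..x i}"
  shows "QQ x N i t \<in> {x 0..x N}"
proof -
  have a: "aa x N i > 0" using aa_pos assms by simp
  have "QQ x N i t - QQ x N i (x (i - 1)) = (t - x (i - 1)) / aa x N i" by (rule QQ_diff[OF assms(1,2)])
  moreover have "QQ x N i (x i) - QQ x N i t = (x i - t) / aa x N i" by (rule QQ_diff[OF assms(1,2)])
  moreover have "(t - x (i - 1)) / aa x N i \<ge> 0" "(x i - t) / aa x N i \<ge> 0"
    using assms(3) a by auto
  ultimately show ?thesis using QQ_left[OF assms(1,2)] QQ_right[OF assms(1,2)] by auto
qed

lemma QQ_powr:
  assumes "1 \<le> i" "i \<le> N"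
  shows "aa x N i powr d * \<bar>QQ x N i u - QQ x N i v\<bar> powr d = \<bar>u - v\<bar> powr d"
proof -
  have a: "aa x N i > 0" using aa_pos assms by simp
  have "aa x N i powr d * \<bar>QQ x N i u - QQ x N i v\<bar> powr d = (aa x N i * \<bar>QQ x N i u - QQ x N i v\<bar>) powr d"
    using a by (simp add: powr_mult)
  also have "aa x N i * \<bar>QQ x N i u - QQ x N i v\<bar> = \<bar>u - v\<bar>"
    using a by (simp add: QQ_diff[OF assms] abs_div)
  finally show ?thesis .
qed

lemma least_piece:
  assumes "t \<in> {x 0..x N}"
  defines "k \<equiv> LEAST i. 1 \<le> i \<and> t \<le> x i"
  shows "1 \<le> k" "k \<le> N" "t \<in> {x (k - 1)..x k}"
proof -
  have ex: "1 \<le> N \<and> t \<le> x N" using assms N1 by auto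
  have P: "1 \<le> k \<and> t \<le> x k" unfolding k_def by (rule LeastI[of _ N]) (rule ex)
  have kN: "k \<le> N" unfolding k_def by (rule Least_le) (rule ex)
  have "x (k - 1) \<le> t"
  proof (cases "k = 1")
    case True then show ?thesis using assms by simp
  next
    case False
    then have "k - 1 < k" "k - 1 \<ge> 1" using P by auto
    then have "\<not> (1 \<le> k - 1 \<and> t \<le> x (k - 1))"
      using not_less_Least[of "k - 1" "\<lambda>i. 1 \<le> i \<and> t \<le> x i"] unfolding k_def by blast
    then show ?thesis using \<open>k - 1 \<ge> 1\<close> by simp
  qed
  then show "1 \<le> k" "k \<le> N" "t \<in> {x (k - 1)..x k}" using P kN by auto
qed

lemma piece_exists: "t \<in> {x 0..x N} \<Longrightarrow> \<exists>i. 1 \<le> i \<and> i \<le> N \<and> t \<in> {x (i - 1)..x i}"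
  using least_piece by blast

lemma Tmap_eq:
  assumes g0: "g (x 0) = B (x 0)" and gN: "g (x N) = B (x N)"
    and i: "1 \<le> i" "i \<le> N" and t: "t \<in> {x (i - 1)..x i}"
  shows "Tmap x N f A B g t = f t + A i (QQ x N i t) * g (QQ x N i t) - A i (QQ x N i t) * B (QQ x N i t)"
proof -
  have "x 0 \<le> x (i - 1)" by (rule xmono_le) (use i in auto)
  moreover have "x i \<le> x N" by (rule xmono_le) (use i in auto)
  ultimately have tI: "t \<in> {x 0..x N}" using t by auto
  define k where "k = (LEAST i. 1 \<le> i \<and> t \<le> x i)"
  note K = least_piece[OF tI, folded k_def]
  have ki: "k \<le> i" unfolding k_def by (rule Least_le) (use i t in auto)
  have T: "Tmap x N f A B g t = f t + A k (QQ x N k t) * g (QQ x N k t) - A k (QQ x N k t) * B (QQ x N k t)"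
    unfolding Tmap_def k_def[symmetric] Let_def by simp
  show ?thesis
  proof (cases "k = i")
    case True then show ?thesis using T by simp
  next
    case False
    then have "k < i" using ki by simp
    then have "x k \<le> x (i - 1)" using xmono_le[of k "i - 1"] i by simp
    then have tk: "t = x k" "t = x (i - 1)" using K(3) t by auto
    have "QQ x N k t = x N" using tk QQ_right K by simp
    moreover have "QQ x N i t = x 0" using QQ_left[OF i] tk(2) by simp
    ultimately show ?thesis using T g0 gN by simp
  qed
qed

end


context pset begin

lemma core:
  fixes A :: "nat \<Rightarrow> real \<Rightarrow> real" and w D :: "real \<Rightarrow> real" and eps S L :: real
  assumes Abnd: "\<And>i s. 1 \<le> i \<Longrightarrow> i \<le> N \<Longrightarrow> s \<in> {x 0..x N} \<Longrightarrow> \<bar>A i s\<bar> \<le> eps * aa x N i powr d"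
    and Ahol: "\<And>i s s'. 1 \<le> i \<Longrightarrow> i \<le> N \<Longrightarrow> s \<in> {x 0..x N} \<Longrightarrow> s' \<in> {x 0..x N} \<Longrightarrow>
                 \<bar>A i s - A i s'\<bar> \<le> eps * aa x N i powr d * \<bar>s - s'\<bar> powr d"
    and w0: "w (x 0) = 0" and wN: "w (x N) = 0"
    and wS: "\<And>s. s \<in> {x 0..x N} \<Longrightarrow> \<bar>w s\<bar> \<le> S"
    and wL: "\<And>s s'. s \<in> {x 0..x N} \<Longrightarrow> s' \<in> {x 0..x N} \<Longrightarrow> \<bar>w s - w s'\<bar> \<le> L * \<bar>s - s'\<bar> powr d"
    and D: "\<And>i t. 1 \<le> i \<Longrightarrow> i \<le> N \<Longrightarrow> t \<in> {x (i - 1)..x i} \<Longrightarrow> D t = A i (QQ x N i t) * w (QQ x N i t)"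
    and eps: "0 \<le> eps" and L0: "0 \<le> L"
  shows "\<And>t. t \<in> {x 0..x N} \<Longrightarrow> \<bar>D t\<bar> \<le> eps * S"
    and "\<And>u v. u \<in> {x 0..x N} \<Longrightarrow> v \<in> {x 0..x N} \<Longrightarrow>
           \<bar>D u - D v\<bar> \<le> eps * max (L + S) (2 powr (1 - d) * L) * \<bar>u - v\<bar> powr d"
proof -
  have S0: "0 \<le> S" using wS[of "x 0"] x0N by auto
  show sup: "\<bar>D t\<bar> \<le> eps * S" if t: "t \<in> {x 0..x N}" for t
  proof -
    obtain i where i: "1 \<le> i" "i \<le> N" "t \<in> {x (i - 1)..x i}" using piece_exists[OF t] by blast
    note s = QQ_range[OF i]
    have "\<bar>D t\<bar> = \<bar>A i (QQ x N i t)\<bar> * \<bar>w (QQ x N i t)\<bar>" using D[OF i] by (simp add: abs_mult)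
    also have "\<dots> \<le> (eps * aa x N i powr d) * S"
      by (rule mult_mono) (use Abnd[OF i(1,2) s] wS[OF s] eps in auto)
    also have "\<dots> \<le> eps * S"
      using mult_left_mono[OF mult_right_mono[OF aa_powr_le1[OF i(1,2)] S0] eps] by (simp add: mult.assoc)
    finally show ?thesis .
  qed
  have endR: "\<bar>D t\<bar> \<le> eps * L * (x i - t) powr d"
    if i: "1 \<le> i" "i \<le> N" "t \<in> {x (i - 1)..x i}" for i t
  proof -
    note s = QQ_range[OF i]
    have xi: "x i \<in> {x (i - 1)..x i}" using xmono_le[of "i - 1" i] i by auto
    have NI: "x N \<in> {x 0..x N}" using x0N by auto
    have "\<bar>D t\<bar> = \<bar>A i (QQ x N i t)\<bar> * \<bar>w (QQ x N i t) - w (QQ x N i (x i))\<bar>"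
      using D[OF i] QQ_right[OF i(1,2)] wN by (simp add: abs_mult)
    also have "\<dots> \<le> (eps * aa x N i powr d) * (L * \<bar>QQ x N i t - QQ x N i (x i)\<bar> powr d)"
      by (rule mult_mono) (use Abnd[OF i(1,2) s] wL[OF s] eps QQ_right[OF i(1,2)] NI in auto)
    also have "\<dots> = eps * L * (aa x N i powr d * \<bar>QQ x N i t - QQ x N i (x i)\<bar> powr d)" by simp
    also have "\<dots> = eps * L * (x i - t) powr d" using QQ_powr[OF i(1,2)] i(3) by simp
    finally show ?thesis .
  qed
  have endL: "\<bar>D t\<bar> \<le> eps * L * (t - x (i - 1)) powr d"
    if i: "1 \<le> i" "i \<le> N" "t \<in> {x (i - 1)..x i}" for i t
  proof -
    note s = QQ_range[OF i]
    have NI: "x 0 \<in> {x 0..x N}" using x0N by auto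
    have "\<bar>D t\<bar> = \<bar>A i (QQ x N i t)\<bar> * \<bar>w (QQ x N i t) - w (QQ x N i (x (i - 1)))\<bar>"
      using D[OF i] QQ_left[OF i(1,2)] w0 by (simp add: abs_mult)
    also have "\<dots> \<le> (eps * aa x N i powr d) * (L * \<bar>QQ x N i t - QQ x N i (x (i - 1))\<bar> powr d)"
      by (rule mult_mono) (use Abnd[OF i(1,2) s] wL[OF s] eps QQ_left[OF i(1,2)] NI in auto)
    also have "\<dots> = eps * L * (aa x N i powr d * \<bar>QQ x N i t - QQ x N i (x (i - 1))\<bar> powr d)" by simp
    also have "\<dots> = eps * L * (t - x (i - 1)) powr d" using QQ_powr[OF i(1,2)] i(3) by simp
    finally show ?thesis .
  qed
  have same: "\<bar>D u - D v\<bar> \<le> eps * (L + S) * \<bar>u - v\<bar> powr d"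
    if i: "1 \<le> i" "i \<le> N" and u: "u \<in> {x (i - 1)..x i}" and v: "v \<in> {x (i - 1)..x i}" for i u v
  proof -
    define s where "s = QQ x N i u"
    define s' where "s' = QQ x N i v"
    have sI: "s \<in> {x 0..x N}" "s' \<in> {x 0..x N}" unfolding s_def s'_def using QQ_range[OF i(1,2)] u v by auto
    have "\<bar>D u - D v\<bar> = \<bar>A i s * (w s - w s') + w s' * (A i s - A i s')\<bar>"
      using D[OF i u] D[OF i v] unfolding s_def s'_def by (simp add: algebra_simps)
    also have "\<dots> \<le> \<bar>A i s\<bar> * \<bar>w s - w s'\<bar> + \<bar>w s'\<bar> * \<bar>A i s - A i s'\<bar>"
      by (metis abs_mult abs_triangle_ineq)
    also have "\<dots> \<le> (eps * aa x N i powr d) * (L * \<bar>s - s'\<bar> powr d) + S * (eps * aa x N i powr d * \<bar>s - s'\<bar> powr d)"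
      by (intro add_mono mult_mono) (use Abnd[OF i sI(1)] wL[OF sI] wS[OF sI(2)] Ahol[OF i sI] eps S0 in auto)
    also have "\<dots> = eps * (L + S) * (aa x N i powr d * \<bar>s - s'\<bar> powr d)" by (simp add: algebra_simps)
    also have "\<dots> = eps * (L + S) * \<bar>u - v\<bar> powr d" using QQ_powr[OF i] unfolding s_def s'_def by simp
    finally show ?thesis .
  qed
  have main: "\<bar>D u - D v\<bar> \<le> eps * max (L + S) (2 powr (1 - d) * L) * \<bar>u - v\<bar> powr d"
    if u: "u \<in> {x 0..x N}" and v: "v \<in> {x 0..x N}" and uv: "u < v" for u v
  proof -
    obtain i where i: "1 \<le> i" "i \<le> N" "u \<in> {x (i - 1)..x i}" using piece_exists[OF u] by blast
    obtain j where j: "1 \<le> j" "j \<le> N" "v \<in> {x (j - 1)..x j}" using piece_exists[OF v] by blast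
    have e0: "0 \<le> eps * \<bar>u - v\<bar> powr d" using eps by simp
    show ?thesis
    proof (cases "i = j")
      case True
      have "\<bar>D u - D v\<bar> \<le> eps * (L + S) * \<bar>u - v\<bar> powr d" using same[OF i(1,2) i(3)] j(3) True by simp
      also have "\<dots> \<le> eps * max (L + S) (2 powr (1 - d) * L) * \<bar>u - v\<bar> powr d"
        using mult_right_mono[OF max.cobounded1[of "L + S" "2 powr (1 - d) * L"] e0] by (simp add: algebra_simps)
      finally show ?thesis .
    next
      case False
      have "\<not> j < i"
      proof
        assume "j < i"
        then have "x j \<le> x (i - 1)" using xmono_le[of j "i - 1"] i by simp
        then show False using i(3) j(3) uv by auto
      qed
      then have ij: "i < j" using False by simp
      then have xij: "x i \<le> x (j - 1)" using xmono_le[of i "j - 1"] j by simp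
      have p: "x i - u \<ge> 0" and q: "v - x (j - 1) \<ge> 0" using i(3) j(3) by auto
      have "\<bar>D u - D v\<bar> \<le> \<bar>D u\<bar> + \<bar>D v\<bar>" by linarith
      also have "\<dots> \<le> eps * L * (x i - u) powr d + eps * L * (v - x (j - 1)) powr d"
        using endR[OF i] endL[OF j] by linarith
      also have "\<dots> = eps * L * ((x i - u) powr d + (v - x (j - 1)) powr d)" by (simp add: algebra_simps)
      also have "\<dots> \<le> eps * L * (2 powr (1 - d) * ((x i - u) + (v - x (j - 1))) powr d)"
        by (rule mult_left_mono[OF powr_sum_le[OF p q d0 d1]]) (use eps L0 in simp)
      also have "\<dots> \<le> eps * L * (2 powr (1 - d) * \<bar>u - v\<bar> powr d)"
        by (intro mult_left_mono powr_mono2) (use eps L0 p q xij uv d0 in auto)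
      also have "\<dots> = eps * (2 powr (1 - d) * L) * \<bar>u - v\<bar> powr d" by simp
      also have "\<dots> \<le> eps * max (L + S) (2 powr (1 - d) * L) * \<bar>u - v\<bar> powr d"
        using mult_right_mono[OF max.cobounded2[of "2 powr (1 - d) * L" "L + S"] e0] by (simp add: algebra_simps)
      finally show ?thesis .
    qed
  qed
  show "\<bar>D u - D v\<bar> \<le> eps * max (L + S) (2 powr (1 - d) * L) * \<bar>u - v\<bar> powr d"
    if u: "u \<in> {x 0..x N}" and v: "v \<in> {x 0..x N}" for u v
  proof -
    consider "u < v" | "u = v" | "v < u" by linarith
    then show ?thesis
    proof cases
      case 1 then show ?thesis using main[OF u v] by simp
    next
      case 2 then show ?thesis by simp
    next
      case 3 then show ?thesis using main[OF v u] by (simp add: abs_minus_commute)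
    qed
  qed
qed

end


lemma bnd_mono: "bnd d I w E \<Longrightarrow> E \<le> E' \<Longrightarrow> bnd d I w E'"
  unfolding bnd_def by (meson mult_right_mono order_trans powr_ge_zero)

lemma complete:
  fixes G :: "nat \<Rightarrow> real \<Rightarrow> real" and p q d \<theta> C :: real
  assumes G: "\<And>r. G r \<in> Lip d {p..q}" and pq: "p < q" and d: "0 < d"
    and th: "0 \<le> \<theta>" "\<theta> < 1" and C: "0 \<le> C"
    and stp: "\<And>r. rho d {p..q} (\<lambda>t. G (Suc r) t - G r t) \<le> C * \<theta> ^ r"
  shows "\<exists>fa. (\<forall>t\<in>{p..q}. (\<lambda>r. G r t) \<longlonglongrightarrow> fa t) \<and>
           (\<forall>r. bnd d {p..q} (\<lambda>t. G r t - fa t) (C * \<theta> ^ r / (1 - \<theta>)))"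
proof -
  define E where "E r = C * \<theta> ^ r / (1 - \<theta>)" for r
  have tail: "bnd d {p..q} (\<lambda>t. G m t - G r t) (C * (\<theta> ^ r - \<theta> ^ m) / (1 - \<theta>))" if "r \<le> m" for r m
    using that
  proof (induction m rule: dec_induct)
    case base then show ?case by (simp add: bnd_def)
  next
    case (step m)
    have L: "(\<lambda>t. G (Suc m) t - G m t) \<in> Lip d {p..q}" by (rule Lip_addsub(2)[OF G G pq d])
    have b1: "bnd d {p..q} (\<lambda>t. G (Suc m) t - G m t) (C * \<theta> ^ m)"
      by (rule rho_bnd[OF L pq d stp])
    have "bnd d {p..q} (\<lambda>t. (G (Suc m) t - G m t) + (G m t - G r t)) (C * \<theta> ^ m + C * (\<theta> ^ r - \<theta> ^ m) / (1 - \<theta>))"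
      by (rule bnd_add[OF b1 step.IH])
    moreover have "C * \<theta> ^ m + C * (\<theta> ^ r - \<theta> ^ m) / (1 - \<theta>) = C * (\<theta> ^ r - \<theta> ^ Suc m) / (1 - \<theta>)"
      using th by (simp add: field_simps)
    ultimately show ?case by simp
  qed
  have tail2: "bnd d {p..q} (\<lambda>t. G m t - G r t) (E r)" if "r \<le> m" for r m
    by (rule bnd_mono[OF tail[OF that]]) (use th C in \<open>auto simp: E_def divide_right_mono mult_left_mono\<close>)
  have E0: "E \<longlonglongrightarrow> 0"
  proof -
    have "(\<lambda>r. (C / (1 - \<theta>)) * \<theta> ^ r) \<longlonglongrightarrow> (C / (1 - \<theta>)) * 0"
      by (intro tendsto_intros) (use th in simp)
    then show ?thesis unfolding E_def by simp
  qed
  have conv: "convergent (\<lambda>r. G r t)" if t: "t \<in> {p..q}" for t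
    unfolding Cauchy_convergent_iff[symmetric] Cauchy_def
  proof (intro allI impI)
    fix e :: real assume e: "0 < e"
    obtain M where M: "\<And>n. n \<ge> M \<Longrightarrow> norm (E n - 0) < e" using LIMSEQ_D[OF E0 e] by blast
    have "dist (G m t) (G n t) < e" if "m \<ge> M" "n \<ge> M" for m n
    proof (cases "n \<le> m")
      case True
      have "\<bar>G m t - G n t\<bar> \<le> E n" using tail2[OF True] t by (simp add: bnd_def)
      then show ?thesis using M[OF that(2)] by (simp add: dist_real_def)
    next
      case False
      have "\<bar>G n t - G m t\<bar> \<le> E m" using tail2[of m n] False t by (simp add: bnd_def)
      then show ?thesis using M[OF that(1)] by (simp add: dist_real_def abs_minus_commute)
    qed
    then show "\<exists>M. \<forall>m\<ge>M. \<forall>n\<ge>M. dist (G m t) (G n t) < e" by blast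
  qed
  define fa where "fa t = lim (\<lambda>r. G r t)" for t
  have lim: "(\<lambda>r. G r t) \<longlonglongrightarrow> fa t" if "t \<in> {p..q}" for t
    using conv[OF that] unfolding fa_def convergent_LIMSEQ_iff .
  have "bnd d {p..q} (\<lambda>t. G r t - fa t) (E r)" for r
    unfolding bnd_def
  proof (intro conjI ballI)
    fix t assume t: "t \<in> {p..q}"
    have "(\<lambda>m. \<bar>G m t - G r t\<bar>) \<longlonglongrightarrow> \<bar>fa t - G r t\<bar>"
      by (intro tendsto_intros lim[OF t])
    moreover have "\<forall>m\<ge>r. \<bar>G m t - G r t\<bar> \<le> E r" using tail2 t by (simp add: bnd_def)
    ultimately have "\<bar>fa t - G r t\<bar> \<le> E r" by (rule Lim_bounded)
    then show "\<bar>G r t - fa t\<bar> \<le> E r" by (simp add: abs_minus_commute)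
  next
    fix u v assume u: "u \<in> {p..q}" and v: "v \<in> {p..q}"
    have "(\<lambda>m. \<bar>(G m u - G r u) - (G m v - G r v)\<bar>) \<longlonglongrightarrow> \<bar>(fa u - G r u) - (fa v - G r v)\<bar>"
      by (intro tendsto_intros lim[OF u] lim[OF v])
    moreover have "\<forall>m\<ge>r. \<bar>(G m u - G r u) - (G m v - G r v)\<bar> \<le> E r * \<bar>u - v\<bar> powr d"
      using tail2 u v by (simp add: bnd_def)
    ultimately have "\<bar>(fa u - G r u) - (fa v - G r v)\<bar> \<le> E r * \<bar>u - v\<bar> powr d" by (rule Lim_bounded)
    then show "\<bar>(G r u - fa u) - (G r v - fa v)\<bar> \<le> E r * \<bar>u - v\<bar> powr d"
      by (simp add: abs_minus_commute algebra_simps)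
  qed
  then show ?thesis using lim unfolding E_def by blast
qed



locale mainloc = pset +
  fixes f :: "real \<Rightarrow> real" and b :: "nat \<Rightarrow> real \<Rightarrow> real"
    and alpha :: "nat \<Rightarrow> nat \<Rightarrow> real \<Rightarrow> real"
  assumes f: "f \<in> Lip d {x 0..x N}"
    and b: "\<And>r. r \<ge> 1 \<Longrightarrow> b r \<in> Lip_f d (x 0) (x N) f"
    and b_bdd: "bdd_above {lip_norm d {x 0..x N} (b r) | r. r \<ge> 1}"
    and alpha: "\<And>i r. 1 \<le> i \<Longrightarrow> i \<le> N \<Longrightarrow> r \<ge> 1 \<Longrightarrow> alpha i r \<in> Lip d {x 0..x N}"
    and alpha_small: "\<And>i r. 1 \<le> i \<Longrightarrow> i \<le> N \<Longrightarrow> r \<ge> 1 \<Longrightarrow>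
           lip_norm d {x 0..x N} (alpha i r) / aa x N i powr d < 1/2"
begin

abbreviation "II \<equiv> {x 0..x N}"
abbreviation "LF \<equiv> Lip_f d (x 0) (x N) f"
abbreviation "T r \<equiv> Tmap x N f (\<lambda>i. alpha i r) (b r)"

definition epsr :: "nat \<Rightarrow> real" where
  "epsr r = Max ((\<lambda>i. lip_norm d II (alpha i r) / aa x N i powr d) ` {1..N})"

lemma eps_props:
  assumes r: "r \<ge> 1"
  shows "0 \<le> epsr r" "epsr r < 1/2"
    "\<And>i. 1 \<le> i \<Longrightarrow> i \<le> N \<Longrightarrow> lip_norm d II (alpha i r) \<le> epsr r * aa x N i powr d"
proof -
  have fin: "finite ((\<lambda>i. lip_norm d II (alpha i r) / aa x N i powr d) ` {1..N})" by simp
  have ne: "((\<lambda>i. lip_norm d II (alpha i r) / aa x N i powr d) ` {1..N}) \<noteq> {}" using N1 by auto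
  have le: "lip_norm d II (alpha i r) / aa x N i powr d \<le> epsr r" if "1 \<le> i" "i \<le> N" for i
    unfolding epsr_def by (rule Max_ge[OF fin]) (use that in auto)
  have "0 \<le> lip_norm d II (alpha 1 r)"
    using Lip_facts(2,6)[OF alpha[OF _ N1 r] x0N d0] by simp
  then have "0 \<le> lip_norm d II (alpha 1 r) / aa x N 1 powr d" by simp
  then show "0 \<le> epsr r" using le[of 1] N1 by simp
  show "epsr r < 1/2" unfolding epsr_def Max_less_iff[OF fin ne] using alpha_small r by auto
  show "lip_norm d II (alpha i r) \<le> epsr r * aa x N i powr d" if "1 \<le> i" "i \<le> N" for i
    using le[OF that] aa_pos[OF that] by (simp add: divide_le_eq)
qed

lemma A_bounds:
  assumes r: "r \<ge> 1" and i: "1 \<le> i" "i \<le> N" and s: "s \<in> II" and s': "s' \<in> II"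
  shows "\<bar>alpha i r s\<bar> \<le> epsr r * aa x N i powr d"
    "\<bar>alpha i r s - alpha i r s'\<bar> \<le> epsr r * aa x N i powr d * \<bar>s - s'\<bar> powr d"
proof -
  note F = Lip_facts[OF alpha[OF i r] x0N d0]
  note e = eps_props(3)[OF r i]
  show "\<bar>alpha i r s\<bar> \<le> epsr r * aa x N i powr d" using F(3)[OF s] F(6) e by linarith
  have "\<bar>alpha i r s - alpha i r s'\<bar> \<le> lip_const d II (alpha i r) * \<bar>s - s'\<bar> powr d" by (rule F(4)[OF s s'])
  also have "\<dots> \<le> epsr r * aa x N i powr d * \<bar>s - s'\<bar> powr d"
    by (rule mult_right_mono) (use F(7) e in auto)
  finally show "\<bar>alpha i r s - alpha i r s'\<bar> \<le> epsr r * aa x N i powr d * \<bar>s - s'\<bar> powr d" .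
qed

lemma LF_D: "g \<in> LF \<Longrightarrow> g \<in> Lip d II \<and> g (x 0) = f (x 0) \<and> g (x N) = f (x N)"
  by (simp add: Lip_f_def)

lemma f_LF: "f \<in> LF" using f by (simp add: Lip_f_def)

lemma diff_core:
  assumes r: "r \<ge> 1" and g: "g \<in> LF" and h: "h \<in> LF"
  shows "(\<lambda>t. T r g t - T r h t) \<in> Lip d II"
    "sup_norm II (\<lambda>t. T r g t - T r h t) \<le> epsr r * sup_norm II (\<lambda>t. g t - h t)"
    "lip_const d II (\<lambda>t. T r g t - T r h t) \<le> epsr r * max (lip_const d II (\<lambda>t. g t - h t) + sup_norm II (\<lambda>t. g t - h t))
        (2 powr (1 - d) * lip_const d II (\<lambda>t. g t - h t))"
proof -
  note G = LF_D[OF g] and H = LF_D[OF h] and B = LF_D[OF b[OF r]]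
  have wL: "(\<lambda>t. g t - h t) \<in> Lip d II" by (rule Lip_addsub(2)) (use G H x0N d0 in auto)
  note W = Lip_facts[OF wL x0N d0]
  have Dq: "T r g t - T r h t = alpha i r (QQ x N i t) * (g (QQ x N i t) - h (QQ x N i t))"
    if "1 \<le> i" "i \<le> N" "t \<in> {x (i - 1)..x i}" for i t
    using Tmap_eq[of g "b r", OF _ _ that, of f "\<lambda>i. alpha i r"]
      Tmap_eq[of h "b r", OF _ _ that, of f "\<lambda>i. alpha i r"] G H B
    by (simp add: algebra_simps)
  note c = core[of "\<lambda>i. alpha i r" "epsr r" "\<lambda>t. g t - h t" "sup_norm II (\<lambda>t. g t - h t)"
      "lip_const d II (\<lambda>t. g t - h t)" "\<lambda>t. T r g t - T r h t"]
  note c' = c[OF A_bounds(1)[OF r] A_bounds(2)[OF r] _ _ W(3) W(4) Dq eps_props(1)[OF r] W(1)]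
  have c1: "\<And>t. t \<in> II \<Longrightarrow> \<bar>T r g t - T r h t\<bar> \<le> epsr r * sup_norm II (\<lambda>t. g t - h t)"
    by (rule c'(1)) (use G H in auto)
  have c2: "\<And>u v. u \<in> II \<Longrightarrow> v \<in> II \<Longrightarrow> \<bar>(T r g u - T r h u) - (T r g v - T r h v)\<bar> \<le>
      epsr r * max (lip_const d II (\<lambda>t. g t - h t) + sup_norm II (\<lambda>t. g t - h t))
        (2 powr (1 - d) * lip_const d II (\<lambda>t. g t - h t)) * \<bar>u - v\<bar> powr d"
    by (rule c'(2)) (use G H in auto)
  show "(\<lambda>t. T r g t - T r h t) \<in> Lip d II" by (rule lipI) (rule c2)
  show "sup_norm II (\<lambda>t. T r g t - T r h t) \<le> epsr r * sup_norm II (\<lambda>t. g t - h t)"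
    by (rule sup_le) (use c1 x0N in auto)
  show "lip_const d II (\<lambda>t. T r g t - T r h t) \<le> epsr r * max (lip_const d II (\<lambda>t. g t - h t) + sup_norm II (\<lambda>t. g t - h t))
        (2 powr (1 - d) * lip_const d II (\<lambda>t. g t - h t))"
    by (rule lip_le[of _ _ _ _ "x 0" "x N"]) (use c2 x0N in auto)
qed

lemma Tb: "T r (b r) t = f t" by (simp add: Tmap_def Let_def)

lemma T_LF:
  assumes r: "r \<ge> 1" and g: "g \<in> LF"
  shows "T r g \<in> LF"
proof -
  note G = LF_D[OF g] and B = LF_D[OF b[OF r]]
  have DL: "(\<lambda>t. T r g t - T r (b r) t) \<in> Lip d II" by (rule diff_core(1)[OF r g b[OF r]])
  have "(\<lambda>t. f t + (T r g t - T r (b r) t)) \<in> Lip d II" by (rule Lip_addsub(1)[OF f DL x0N d0])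
  moreover have "(\<lambda>t. f t + (T r g t - T r (b r) t)) = T r g" by (simp add: Tb)
  ultimately have L: "T r g \<in> Lip d II" by simp
  have one: "1 \<le> (1::nat)" "1 \<le> N" using N1 by auto
  have "x 0 \<in> {x (1 - 1)..x 1}" using xmono_le[of 0 1] N1 by simp
  from Tmap_eq[of g "b r", OF _ _ one this, of f "\<lambda>i. alpha i r"] G B QQ_left[OF one]
  have e0: "T r g (x 0) = f (x 0)" by simp
  have NN: "N \<le> N" by simp
  have "x N \<in> {x (N - 1)..x N}" using xmono_le[of "N - 1" N] N1 by simp
  from Tmap_eq[of g "b r", OF _ _ one(2) NN this, of f "\<lambda>i. alpha i r"] G B QQ_right[OF one(2) NN]
  have eN: "T r g (x N) = f (x N)" by simp
  show ?thesis using L e0 eN by (simp add: Lip_f_def)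
qed

end


context mainloc begin

definition qq :: real where "qq = max (3/4) (2 powr (-d))"

lemma two_powr: "2 powr (1 - d) = 2 * 2 powr (-d)" "2 powr (1 - d) \<le> 2" "2 powr (-d) < 1"
proof -
  show a: "2 powr (1 - d) = 2 * 2 powr (-d)" using powr_add[of 2 1 "-d"] by simp
  have "2 powr (-d) < 2 powr 0" by (rule powr_less_mono) (use d0 in auto)
  then show "2 powr (-d) < 1" by simp
  then show "2 powr (1 - d) \<le> 2" using a by simp
qed

lemma qq_props: "0 \<le> qq" "qq < 1" "3/4 \<le> qq" "2 powr (-d) \<le> qq"
  using two_powr(3) by (auto simp: qq_def)

lemma contr2:
  assumes r: "r \<ge> 1" and g: "g \<in> LF" and h: "h \<in> LF"
  shows "lip_norm d II (\<lambda>t. T r g t - T r h t) \<le> (2 * epsr r) * lip_norm d II (\<lambda>t. g t - h t)"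
proof -
  note G = LF_D[OF g] and H = LF_D[OF h]
  have wL: "(\<lambda>t. g t - h t) \<in> Lip d II" by (rule Lip_addsub(2)) (use G H x0N d0 in auto)
  note W = Lip_facts[OF wL x0N d0]
  note DC = diff_core[OF r g h]
  define S where "S = sup_norm II (\<lambda>t. g t - h t)"
  define L where "L = lip_const d II (\<lambda>t. g t - h t)"
  define M where "M = lip_norm d II (\<lambda>t. g t - h t)"
  have SM: "S \<le> M" "L \<le> M" "0 \<le> S" "0 \<le> L" using W unfolding S_def L_def M_def by auto
  have e: "0 \<le> epsr r" using eps_props(1)[OF r] .
  have "epsr r * S \<le> epsr r * (2 * M)" by (rule mult_left_mono) (use SM e in auto)
  then have "epsr r * S \<le> 2 * epsr r * M" by simp
  moreover have "max (L + S) (2 powr (1 - d) * L) \<le> 2 * M"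
    using SM two_powr(2) mult_right_mono[OF two_powr(2) SM(4)] by auto
  then have "epsr r * max (L + S) (2 powr (1 - d) * L) \<le> epsr r * (2 * M)"
    by (rule mult_left_mono[OF _ e])
  then have "epsr r * max (L + S) (2 powr (1 - d) * L) \<le> 2 * epsr r * M" by simp
  ultimately have A1: "sup_norm II (\<lambda>t. T r g t - T r h t) \<le> 2 * epsr r * M"
    and A2: "lip_const d II (\<lambda>t. T r g t - T r h t) \<le> 2 * epsr r * M"
    using DC(2,3) unfolding S_def[symmetric] L_def[symmetric] by linarith+
  show ?thesis unfolding M_def[symmetric] lip_norm_def[of d II "\<lambda>t. T r g t - T r h t"]
    using A1 A2 by simp
qed

lemma contr3:
  assumes r: "r \<ge> 1" and g: "g \<in> LF" and h: "h \<in> LF"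
  shows "rho d II (\<lambda>t. T r g t - T r h t) \<le> qq * rho d II (\<lambda>t. g t - h t)"
proof -
  note G = LF_D[OF g] and H = LF_D[OF h]
  have wL: "(\<lambda>t. g t - h t) \<in> Lip d II" by (rule Lip_addsub(2)) (use G H x0N d0 in auto)
  note W = Lip_facts[OF wL x0N d0]
  note DC = diff_core[OF r g h]
  define S where "S = sup_norm II (\<lambda>t. g t - h t)"
  define L where "L = lip_const d II (\<lambda>t. g t - h t)"
  have SM: "0 \<le> S" "0 \<le> L" using W unfolding S_def L_def by auto
  have e: "0 \<le> epsr r" "epsr r \<le> 1/2" using eps_props(1,2)[OF r] by auto
  have m0: "0 \<le> max (L + S) (2 powr (1 - d) * L)" using SM by auto
  have a: "epsr r * max (L + S) (2 powr (1 - d) * L) \<le> 1/2 * max (L + S) (2 powr (1 - d) * L)"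
    by (rule mult_right_mono[OF e(2) m0])
  have bb: "2 * (epsr r * S) \<le> S" using mult_right_mono[OF e(2) SM(1)] by simp
  have c: "1/2 * max (L + S) (2 powr (1 - d) * L) + S \<le> qq * (L + 2 * S)"
  proof (cases "2 powr (1 - d) * L \<le> L + S")
    case True
    then have mx: "max (L + S) (2 powr (1 - d) * L) = L + S" by simp
    have "1/2 * max (L + S) (2 powr (1 - d) * L) + S = 1/2 * L + 3/2 * S" unfolding mx by (simp add: field_simps)
    also have "\<dots> \<le> qq * L + qq * (2 * S)"
      using mult_right_mono[OF qq_props(3) SM(2)] mult_right_mono[OF qq_props(3), of "2 * S"] SM by auto
    finally show ?thesis by (simp add: algebra_simps)
  next
    case False
    then have "1/2 * max (L + S) (2 powr (1 - d) * L) + S = 2 powr (-d) * L + S" by (simp add: two_powr(1))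
    also have "\<dots> \<le> qq * L + qq * (2 * S)"
      using mult_right_mono[OF qq_props(4) SM(2)] mult_right_mono[OF qq_props(3), of "2 * S"] SM by auto
    finally show ?thesis by (simp add: algebra_simps)
  qed
  have "rho d II (\<lambda>t. T r g t - T r h t) \<le> epsr r * max (L + S) (2 powr (1 - d) * L) + 2 * (epsr r * S)"
    using DC(2,3) unfolding rho_def S_def L_def by linarith
  also have "\<dots> \<le> qq * (L + 2 * S)" using a bb c by linarith
  finally show ?thesis unfolding rho_def S_def L_def .
qed

abbreviation "FF r g \<equiv> Tcomp x N f alpha b r g"

lemma FF_0: "FF 0 g = g" by (simp add: Tcomp_def)

lemma FF_Suc: "FF (Suc r) g = FF r (T (Suc r) g)"
  by (simp add: Tcomp_def)

lemma FF_LF: "g \<in> LF \<Longrightarrow> FF r g \<in> LF"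
proof (induction r arbitrary: g)
  case 0 then show ?case by (simp add: FF_0)
next
  case (Suc r)
  show ?case unfolding FF_Suc by (rule Suc.IH[OF T_LF[OF _ Suc.prems]]) simp
qed

lemma FF_contr: "g \<in> LF \<Longrightarrow> h \<in> LF \<Longrightarrow> rho d II (\<lambda>t. FF r g t - FF r h t) \<le> qq ^ r * rho d II (\<lambda>t. g t - h t)"
proof (induction r arbitrary: g h)
  case 0 then show ?case by (simp add: FF_0)
next
  case (Suc r)
  have r: "Suc r \<ge> 1" by simp
  have "rho d II (\<lambda>t. FF (Suc r) g t - FF (Suc r) h t)
      \<le> qq ^ r * rho d II (\<lambda>t. T (Suc r) g t - T (Suc r) h t)"
    unfolding FF_Suc by (rule Suc.IH[OF T_LF[OF r Suc.prems(1)] T_LF[OF r Suc.prems(2)]])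
  also have "\<dots> \<le> qq ^ r * (qq * rho d II (\<lambda>t. g t - h t))"
    by (rule mult_left_mono[OF contr3[OF r Suc.prems]]) (use qq_props in simp)
  finally show ?case by (simp add: algebra_simps)
qed

end


context mainloc begin

lemma part3:
  "\<exists>fa\<in>LF.
        (\<forall>g\<in>LF. (\<lambda>r. lip_norm d II (\<lambda>t. FF r g t - fa t)) \<longlonglongrightarrow> 0)
      \<and> (\<forall>h\<in>LF. (\<forall>g\<in>LF. (\<lambda>r. lip_norm d II (\<lambda>t. FF r g t - h t)) \<longlonglongrightarrow> 0)
           \<longrightarrow> (\<forall>t\<in>II. h t = fa t))"
proof -
  obtain Bb where Bb: "\<And>r. r \<ge> 1 \<Longrightarrow> lip_norm d II (b r) \<le> Bb"
    using b_bdd unfolding bdd_above_def by blast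
  have fL: "f \<in> Lip d II" by (rule f)
  note FL = Lip_facts[OF fL x0N d0]
  have bL: "b r \<in> Lip d II" if "r \<ge> 1" for r using LF_D[OF b[OF that]] by simp
  have rhob: "rho d II (b r) \<le> 3 * Bb" if r: "r \<ge> 1" for r
  proof -
    note BF = Lip_facts[OF bL[OF r] x0N d0]
    have "rho d II (b r) \<le> 3 * lip_norm d II (b r)" using BF(6,7) by (simp add: rho_def)
    then show ?thesis using Bb[OF r] by linarith
  qed
  define C0 where "C0 = rho d II f + 3 * Bb"
  have C0: "0 \<le> C0"
  proof -
    have "0 \<le> lip_norm d II (b 1)" using Lip_facts(2,6)[OF bL[of 1] x0N d0] by simp
    then show ?thesis using Bb[of 1] FL(1,2) unfolding C0_def rho_def by simp
  qed
  define G where "G r = FF r f" for r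
  have GLF: "G r \<in> LF" for r unfolding G_def by (rule FF_LF[OF f_LF])
  have GL: "G r \<in> Lip d II" for r using LF_D[OF GLF] by simp
  have stepT: "rho d II (\<lambda>t. T k f t - f t) \<le> C0" if k: "k \<ge> 1" for k
  proof -
    have "(\<lambda>t. T k f t - f t) = (\<lambda>t. T k f t - T k (b k) t)" by (simp add: Tb)
    then have "rho d II (\<lambda>t. T k f t - f t) = rho d II (\<lambda>t. T k f t - T k (b k) t)" by simp
    also have "\<dots> \<le> qq * rho d II (\<lambda>t. f t - b k t)" by (rule contr3[OF k f_LF b[OF k]])
    also have "\<dots> \<le> rho d II (\<lambda>t. f t - b k t)"
    proof -
      have L: "(\<lambda>t. f t - b k t) \<in> Lip d II" by (rule Lip_addsub(2)[OF fL bL[OF k] x0N d0])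
      have "0 \<le> rho d II (\<lambda>t. f t - b k t)" using Lip_facts(1,2)[OF L x0N d0] by (simp add: rho_def)
      then show ?thesis using mult_right_mono[of qq 1 "rho d II (\<lambda>t. f t - b k t)"] qq_props(2) by simp
    qed
    also have "\<dots> \<le> rho d II f + rho d II (b k)" by (rule Lip_addsub(4)[OF fL bL[OF k] x0N d0])
    also have "\<dots> \<le> C0" using rhob[OF k] unfolding C0_def by simp
    finally show ?thesis .
  qed
  have step: "rho d II (\<lambda>t. G (Suc r) t - G r t) \<le> C0 * qq ^ r" for r
  proof -
    have "rho d II (\<lambda>t. G (Suc r) t - G r t) = rho d II (\<lambda>t. FF r (T (Suc r) f) t - FF r f t)"
      unfolding G_def FF_Suc ..
    also have "\<dots> \<le> qq ^ r * rho d II (\<lambda>t. T (Suc r) f t - f t)"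
      by (rule FF_contr[OF T_LF[OF _ f_LF] f_LF]) simp
    also have "\<dots> \<le> qq ^ r * C0"
      by (rule mult_left_mono[OF stepT]) (use qq_props in simp_all)
    finally show ?thesis by (simp add: mult.commute)
  qed
  obtain fa where lim: "\<And>t. t \<in> II \<Longrightarrow> (\<lambda>r. G r t) \<longlonglongrightarrow> fa t"
    and bndG: "\<And>r. bnd d II (\<lambda>t. G r t - fa t) (C0 * qq ^ r / (1 - qq))"
    using complete[OF GL x0N d0 qq_props(1,2) C0 step] by blast
  define E where "E r = C0 * qq ^ r / (1 - qq)" for r
  have E0: "E \<longlonglongrightarrow> 0"
  proof -
    have "(\<lambda>r. (C0 / (1 - qq)) * qq ^ r) \<longlonglongrightarrow> (C0 / (1 - qq)) * 0"
      by (intro tendsto_intros) (use qq_props in simp)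
    then show ?thesis unfolding E_def by simp
  qed
  have d0L: "(\<lambda>t. G 0 t - fa t) \<in> Lip d II" by (rule bnd_Lip[OF bndG])
  have "(\<lambda>t. G 0 t - (G 0 t - fa t)) \<in> Lip d II" by (rule Lip_addsub(2)[OF GL d0L x0N d0])
  then have faL: "fa \<in> Lip d II" by simp
  have end0: "fa (x 0) = f (x 0)"
  proof -
    have "(\<lambda>r. G r (x 0)) \<longlonglongrightarrow> fa (x 0)" by (rule lim) (use x0N in auto)
    moreover have "(\<lambda>r. G r (x 0)) = (\<lambda>r. f (x 0))" using GLF by (simp add: Lip_f_def)
    ultimately show ?thesis using LIMSEQ_unique tendsto_const by metis
  qed
  have endN: "fa (x N) = f (x N)"
  proof -
    have "(\<lambda>r. G r (x N)) \<longlonglongrightarrow> fa (x N)" by (rule lim) (use x0N in auto)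
    moreover have "(\<lambda>r. G r (x N)) = (\<lambda>r. f (x N))" using GLF by (simp add: Lip_f_def)
    ultimately show ?thesis using LIMSEQ_unique tendsto_const by metis
  qed
  have faLF: "fa \<in> LF" using faL end0 endN by (simp add: Lip_f_def)
  have conv: "(\<lambda>r. lip_norm d II (\<lambda>t. FF r g t - fa t)) \<longlonglongrightarrow> 0" if g: "g \<in> LF" for g
  proof -
    define R where "R = rho d II (\<lambda>t. g t - f t)"
    have b1: "bnd d II (\<lambda>t. FF r g t - FF r f t) (qq ^ r * R)" for r
    proof (rule rho_bnd[OF _ x0N d0])
      show "(\<lambda>t. FF r g t - FF r f t) \<in> Lip d II"
        by (rule Lip_addsub(2)) (use LF_D[OF FF_LF[OF g]] LF_D[OF FF_LF[OF f_LF]] x0N d0 in auto)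
      show "rho d II (\<lambda>t. FF r g t - FF r f t) \<le> qq ^ r * R" unfolding R_def by (rule FF_contr[OF g f_LF])
    qed
    have b2: "bnd d II (\<lambda>t. FF r g t - fa t) (qq ^ r * R + E r)" for r
      using bnd_add[OF b1[of r] bndG[of r]] unfolding G_def E_def by simp
    have lim0: "(\<lambda>r. qq ^ r * R + E r) \<longlonglongrightarrow> 0"
    proof -
      have "(\<lambda>r. qq ^ r * R + E r) \<longlonglongrightarrow> 0 * R + 0"
        by (intro tendsto_intros E0) (use qq_props in simp)
      then show ?thesis by simp
    qed
    show ?thesis
    proof (rule tendsto_sandwich[OF _ _ tendsto_const lim0])
      show "\<forall>\<^sub>F r in sequentially. 0 \<le> lip_norm d II (\<lambda>t. FF r g t - fa t)"
        using bnd_norm(1)[OF b2 x0N] by simp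
      show "\<forall>\<^sub>F r in sequentially. lip_norm d II (\<lambda>t. FF r g t - fa t) \<le> qq ^ r * R + E r"
        using bnd_norm(2)[OF b2 x0N] by simp
    qed
  qed
  have uniq: "\<forall>t\<in>II. h t = fa t"
    if h: "h \<in> LF" and hc: "\<forall>g\<in>LF. (\<lambda>r. lip_norm d II (\<lambda>t. FF r g t - h t)) \<longlonglongrightarrow> 0" for h
  proof
    fix t assume t: "t \<in> II"
    have hf: "(\<lambda>r. lip_norm d II (\<lambda>t. G r t - h t)) \<longlonglongrightarrow> 0" using hc f_LF unfolding G_def by blast
    have "(\<lambda>r. G r t - h t) \<longlonglongrightarrow> 0"
    proof (rule Lim_null_comparison[OF _ hf])
      show "\<forall>\<^sub>F r in sequentially. norm (G r t - h t) \<le> lip_norm d II (\<lambda>t. G r t - h t)"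
      proof (rule always_eventually, rule allI)
        fix r
        have L: "(\<lambda>t. G r t - h t) \<in> Lip d II" by (rule Lip_addsub(2)[OF GL _ x0N d0]) (use LF_D[OF h] in simp)
        note HF = Lip_facts[OF L x0N d0]
        show "norm (G r t - h t) \<le> lip_norm d II (\<lambda>t. G r t - h t)" using HF(3)[OF t] HF(6) by simp
      qed
    qed
    then have "(\<lambda>r. G r t) \<longlonglongrightarrow> h t" by (rule LIM_zero_cancel)
    then show "h t = fa t" using lim[OF t] LIMSEQ_unique by blast
  qed
  show ?thesis using faLF conv uniq by blast
qed

end

theorem mainTheorem1:
  fixes x :: "nat \<Rightarrow> real" and N :: nat and d :: real
    and f :: "real \<Rightarrow> real" and b :: "nat \<Rightarrow> real \<Rightarrow> real"
    and alpha :: "nat \<Rightarrow> nat \<Rightarrow> real \<Rightarrow> real"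
  assumes N: "N \<ge> 1"
    and part: "\<And>i. i < N \<Longrightarrow> x i < x (Suc i)"
    and d: "0 < d" "d \<le> 1"
    and f: "f \<in> Lip d {x 0..x N}"
    and b: "\<And>r. r \<ge> 1 \<Longrightarrow> b r \<in> Lip_f d (x 0) (x N) f"
    and b_bdd: "bdd_above {lip_norm d {x 0..x N} (b r) | r. r \<ge> 1}"
    and alpha: "\<And>i r. 1 \<le> i \<Longrightarrow> i \<le> N \<Longrightarrow> r \<ge> 1 \<Longrightarrow> alpha i r \<in> Lip d {x 0..x N}"
    and alpha_small: "\<And>i r. 1 \<le> i \<Longrightarrow> i \<le> N \<Longrightarrow> r \<ge> 1 \<Longrightarrow>
           lip_norm d {x 0..x N} (alpha i r) / aa x N i powr d < 1/2"
  shows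
    "(\<forall>r\<ge>1. \<forall>g\<in>Lip_f d (x 0) (x N) f.
        Tmap x N f (\<lambda>i. alpha i r) (b r) g \<in> Lip_f d (x 0) (x N) f \<and>
        (\<forall>i\<in>{1..N}. \<forall>t\<in>{x (i - 1)..x i}.
            Tmap x N f (\<lambda>i. alpha i r) (b r) g t
              = f t + alpha i r (QQ x N i t) * g (QQ x N i t)
                    - alpha i r (QQ x N i t) * b r (QQ x N i t)))
   \<and> (\<forall>r\<ge>1. \<exists>c. 0 \<le> c \<and> c < 1 \<and>
        (\<forall>g\<in>Lip_f d (x 0) (x N) f. \<forall>h\<in>Lip_f d (x 0) (x N) f.
           lip_norm d {x 0..x N}
             (\<lambda>t. Tmap x N f (\<lambda>i. alpha i r) (b r) g t - Tmap x N f (\<lambda>i. alpha i r) (b r) h t)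
           \<le> c * lip_norm d {x 0..x N} (\<lambda>t. g t - h t)))
   \<and> (\<exists>fa\<in>Lip_f d (x 0) (x N) f.
        (\<forall>g\<in>Lip_f d (x 0) (x N) f.
           (\<lambda>r. lip_norm d {x 0..x N} (\<lambda>t. Tcomp x N f alpha b r g t - fa t)) \<longlonglongrightarrow> 0)
      \<and> (\<forall>h\<in>Lip_f d (x 0) (x N) f.
           (\<forall>g\<in>Lip_f d (x 0) (x N) f.
              (\<lambda>r. lip_norm d {x 0..x N} (\<lambda>t. Tcomp x N f alpha b r g t - h t)) \<longlonglongrightarrow> 0)
           \<longrightarrow> (\<forall>t\<in>{x 0..x N}. h t = fa t)))"
proof -
  interpret M: mainloc x N d f b alpha
    using assms by unfold_locales auto
  have P1: "\<forall>r\<ge>1. \<forall>g\<in>Lip_f d (x 0) (x N) f.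
        Tmap x N f (\<lambda>i. alpha i r) (b r) g \<in> Lip_f d (x 0) (x N) f \<and>
        (\<forall>i\<in>{1..N}. \<forall>t\<in>{x (i - 1)..x i}.
            Tmap x N f (\<lambda>i. alpha i r) (b r) g t
              = f t + alpha i r (QQ x N i t) * g (QQ x N i t)
                    - alpha i r (QQ x N i t) * b r (QQ x N i t))"
  proof (intro allI impI ballI conjI)
    fix r :: nat and g assume r: "r \<ge> 1" and g: "g \<in> Lip_f d (x 0) (x N) f"
    show "Tmap x N f (\<lambda>i. alpha i r) (b r) g \<in> Lip_f d (x 0) (x N) f" by (rule M.T_LF[OF r g])
    fix i t assume i: "i \<in> {1..N}" and t: "t \<in> {x (i - 1)..x i}"
    have "g (x 0) = b r (x 0)" "g (x N) = b r (x N)"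
      using M.LF_D[OF g] M.LF_D[OF b[OF r]] by auto
    then show "Tmap x N f (\<lambda>i. alpha i r) (b r) g t
              = f t + alpha i r (QQ x N i t) * g (QQ x N i t)
                    - alpha i r (QQ x N i t) * b r (QQ x N i t)"
      using M.Tmap_eq[of g "b r" i t f "\<lambda>i. alpha i r"] i t by auto
  qed
  have P2: "\<forall>r\<ge>1. \<exists>c. 0 \<le> c \<and> c < 1 \<and>
        (\<forall>g\<in>Lip_f d (x 0) (x N) f. \<forall>h\<in>Lip_f d (x 0) (x N) f.
           lip_norm d {x 0..x N}
             (\<lambda>t. Tmap x N f (\<lambda>i. alpha i r) (b r) g t - Tmap x N f (\<lambda>i. alpha i r) (b r) h t)
           \<le> c * lip_norm d {x 0..x N} (\<lambda>t. g t - h t))"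
  proof (intro allI impI)
    fix r :: nat assume r: "r \<ge> 1"
    show "\<exists>c. 0 \<le> c \<and> c < 1 \<and>
        (\<forall>g\<in>Lip_f d (x 0) (x N) f. \<forall>h\<in>Lip_f d (x 0) (x N) f.
           lip_norm d {x 0..x N}
             (\<lambda>t. Tmap x N f (\<lambda>i. alpha i r) (b r) g t - Tmap x N f (\<lambda>i. alpha i r) (b r) h t)
           \<le> c * lip_norm d {x 0..x N} (\<lambda>t. g t - h t))"
      using M.eps_props(1,2)[OF r] M.contr2[OF r] by (intro exI[of _ "2 * M.epsr r"]) auto
  qed
  show ?thesis using P1 P2 M.part3 by blast
qed

end
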